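(* Let $\pi\in\mathsf{G}_{r,n}$ and let $\text{A-code}(\pi)=(c_1^{[e_1]},c_2^{[e_2]},\dots,c_n^{[e_n]})$. Then $$\ell(\pi)=\sum_{i=1}^n\Bigl(i-c_i+\chi(e_i>0)\cdot\bigl(2(c_i-1)+e_i\bigr)\Bigr),$$ where $\chi(A)=1$ if $A$ holds and $0$ otherwise.
   Context: $\mathsf{G}_{r,n}=C_r\wr\mathfrak S_n$: pairs $(\sigma,\mathbf z)$, $\sigma\in\mathfrak S_n$, $\mathbf z\in(\mathbb Z/r\mathbb Z)^n$, written as words $\sigma_1^{[z_1]}\cdots\sigma_n^{[z_n]}$ (base values $\sigma_i$, colors $z_i\in\{0,\dots,r-1\}$), with product $(\sigma,\mathbf z)(\rho,\mathbf w)=(\sigma\rho,\mathbf w+\rho(\mathbf z))$, $\rho(\mathbf z)=(z_{\rho(1)},\dots,z_{\rho(n)})$. $\ell(\pi)$ is the minimal number of factors needed to write $\pi$ as a product of $s_0=1^{[1]}2\cdots n$ and $s_1,\dots,s_{n-1}$, where $s_i$ has base permutation $(i\ i+1)$ and all colors $0$. A-code: set $\pi^{(n)}=\pi$; for $j=n,n-1,\dots,1$, if the letter with base value $j$ sits at position $p$ of the word $\pi^{(j)}$ and has color $t$, put $c_j=p$, $e_j=t$, and let $\pi^{(j-1)}$ be obtained from $\pi^{(j)}$ by deleting this letter. Then $\text{A-code}(\pi)=(c_1^{[e_1]},\dots,c_n^{[e_n]})$. *)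

theory Defs
  imports Main
begin

text \<open>Colored permutations of G_{r,n} = C_r wr S_n are represented as words:
  lists of letters (base value, color). Position i (1-based) of the list holds
  the letter sigma_i^[z_i].\<close>

type_synonym cword = "(nat \<times> nat) list"

definition G :: "nat \<Rightarrow> nat \<Rightarrow> cword set" where
  "G r n = {w. length w = n \<and> distinct (map fst w) \<and> set (map fst w) = {1..n}
              \<and> (\<forall>x\<in>set w. snd x < r)}"

text \<open>Product (sigma,z)(rho,w) = (sigma rho, w + rho(z)), with rho(z)_i = z_{rho(i)}.\<close>
definition cmult :: "nat \<Rightarrow> cword \<Rightarrow> cword \<Rightarrow> cword" where
  "cmult r a b = map (\<lambda>y. (fst (a ! (fst y - 1)), (snd y + snd (a ! (fst y - 1))) mod r)) b"

definition cid :: "nat \<Rightarrow> cword" where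
  "cid n = map (\<lambda>k. (k, 0)) [1..<n+1]"

definition gen0 :: "nat \<Rightarrow> nat \<Rightarrow> cword" where
  "gen0 r n = map (\<lambda>k. (k, if k = 1 then 1 mod r else 0)) [1..<n+1]"

definition geni :: "nat \<Rightarrow> nat \<Rightarrow> cword" where
  "geni n i = map (\<lambda>k. (if k = i then i + 1 else if k = i + 1 then i else k, 0)) [1..<n+1]"

definition gens :: "nat \<Rightarrow> nat \<Rightarrow> cword set" where
  "gens r n = {gen0 r n} \<union> {geni n i | i. 1 \<le> i \<and> i < n}"

definition clen :: "nat \<Rightarrow> nat \<Rightarrow> cword \<Rightarrow> nat" where
  "clen r n w = (LEAST k. \<exists>gs. length gs = k \<and> set gs \<subseteq> gens r n
                               \<and> foldr (cmult r) gs (cid n) = w)"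

text \<open>A-code. acode_aux j w returns [(c_1,e_1),...,(c_j,e_j)] for the word w = pi^(j):
  the letter with base value j sits at (1-based) position c_j with color e_j and is deleted.\<close>
fun acode_aux :: "nat \<Rightarrow> cword \<Rightarrow> (nat \<times> nat) list" where
  "acode_aux 0 w = []"
| "acode_aux (Suc j) w =
     (let p = length (takeWhile (\<lambda>x. fst x \<noteq> Suc j) w) + 1;
          t = snd (w ! (p - 1))
      in acode_aux j (filter (\<lambda>x. fst x \<noteq> Suc j) w) @ [(p, t)])"

definition acode :: "cword \<Rightarrow> (nat \<times> nat) list" where
  "acode w = acode_aux (length w) w"

end

theory Submission
  imports Defs
begin
definition pos :: "nat \<Rightarrow> cword \<Rightarrow> nat" where
  "pos v w = length (takeWhile (\<lambda>x. fst x \<noteq> v) w)"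
lemma pos_less: "v \<in> fst ` set w \<Longrightarrow> pos v w < length w"
  unfolding pos_def by (induction w) auto
lemma pos_nth: "v \<in> fst ` set w \<Longrightarrow> fst (w ! pos v w) = v"
  unfolding pos_def by (induction w) auto
lemma before_pos: "j < pos v w \<Longrightarrow> fst (w ! j) \<noteq> v"
  unfolding pos_def by (induction w arbitrary: j) (auto simp: nth_Cons split: if_splits nat.splits)

lemma pos_of_nth:
  assumes "distinct (map fst w)" "j < length w"
  shows "pos (fst (w ! j)) w = j"
proof -
  have "\<not> j < pos (fst (w ! j)) w"
    using before_pos[of j "fst (w!j)" w] by blast
  moreover have "pos (fst (w ! j)) w < length w" using assms(2) by (intro pos_less) auto
  moreover have "fst (w ! pos (fst (w ! j)) w) = fst (w ! j)" using assms(2) by (intro pos_nth) auto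
  ultimately show ?thesis using assms nth_eq_iff_index_eq[of "map fst w"] by fastforce
qed

definition cc :: "nat \<Rightarrow> cword \<Rightarrow> nat" where
  "cc k w = length (filter (\<lambda>x. fst x < k) (takeWhile (\<lambda>x. fst x \<noteq> k) w))"
definition col :: "nat \<Rightarrow> cword \<Rightarrow> nat" where
  "col k w = snd (w ! pos k w)"
definition trm :: "nat \<Rightarrow> cword \<Rightarrow> int" where
  "trm k w = int k - 1 - int (cc k w) + (if col k w > 0 then 2 * int (cc k w) + int (col k w) else 0)"
definition FF :: "nat \<Rightarrow> cword \<Rightarrow> int" where
  "FF n w = (\<Sum>k=1..n. trm k w)"

lemma cc_card: "cc k w = card {j. j < pos k w \<and> fst (w ! j) < k}"
proof -
  have "cc k w = card {j. j < pos k w \<and> fst (takeWhile (\<lambda>x. fst x \<noteq> k) w ! j) < k}"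
    unfolding cc_def length_filter_conv_card pos_def by simp
  also have "\<dots> = card {j. j < pos k w \<and> fst (w ! j) < k}"
    by (rule arg_cong[where f=card]) (auto simp: pos_def takeWhile_nth)
  finally show ?thesis .
qed

lemma takeWhile_filter_comm:
  "k \<noteq> m \<Longrightarrow> takeWhile (\<lambda>x. fst x \<noteq> k) (filter (\<lambda>x. fst x \<noteq> m) w)
     = filter (\<lambda>x. fst x \<noteq> m) (takeWhile (\<lambda>x. fst x \<noteq> k) w)"
  by (induction w) auto

lemma dropWhile_filter_comm:
  "k \<noteq> m \<Longrightarrow> dropWhile (\<lambda>x. fst x \<noteq> k) (filter (\<lambda>x. fst x \<noteq> m) w)
     = filter (\<lambda>x. fst x \<noteq> m) (dropWhile (\<lambda>x. fst x \<noteq> k) w)"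
  by (induction w) auto

lemma col_alt: "k \<in> fst ` set w \<Longrightarrow> col k w = snd (hd (dropWhile (\<lambda>x. fst x \<noteq> k) w))"
  unfolding col_def pos_def by (induction w) auto

lemma length_acode_aux: "length (acode_aux j w) = j"
  by (induction j arbitrary: w) (auto simp: Let_def)

lemma acode_aux_nth:
  assumes "distinct (map fst w)" "set (map fst w) = {1..j}" "1 \<le> k" "k \<le> j"
  shows "acode_aux j w ! (k - 1) = (cc k w + 1, col k w)"
  using assms
proof (induction j arbitrary: w k)
  case 0 then show ?case by simp
next
  case (Suc j)
  define w' where "w' = filter (\<lambda>x. fst x \<noteq> Suc j) w"
  have d': "distinct (map fst w')" unfolding w'_def using Suc.prems(1)
    by (simp add: distinct_map_filter)
  have s': "set (map fst w') = {1..j}"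
  proof -
    have "set (map fst w') = fst ` set w - {Suc j}" unfolding w'_def by auto
    also have "\<dots> = {1..j}" using Suc.prems(2) by auto
    finally show ?thesis .
  qed
  have eq: "acode_aux (Suc j) w = acode_aux j w' @ [(pos (Suc j) w + 1, col (Suc j) w)]"
    by (simp add: Let_def w'_def pos_def col_def)
  show ?case
  proof (cases "k = Suc j")
    case True
    have "cc (Suc j) w = pos (Suc j) w"
    proof -
      have "\<forall>x\<in>set (takeWhile (\<lambda>x. fst x \<noteq> Suc j) w). fst x < Suc j"
      proof
        fix x assume x: "x \<in> set (takeWhile (\<lambda>x. fst x \<noteq> Suc j) w)"
        then have "x \<in> set w" "fst x \<noteq> Suc j" by (auto dest: set_takeWhileD)
        moreover have "fst x \<in> set (map fst w)" using \<open>x \<in> set w\<close> by simp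
        ultimately have "fst x \<in> {1..Suc j}" using Suc.prems(2) by (simp only:)
        then show "fst x < Suc j" using \<open>fst x \<noteq> Suc j\<close> by simp
      qed
      then show ?thesis unfolding cc_def pos_def by (simp add: filter_id_conv)
    qed
    then show ?thesis using True eq by (simp add: nth_append length_acode_aux col_def)
  next
    case False
    then have kj: "k \<le> j" using Suc.prems by simp
    have IH: "acode_aux j w' ! (k - 1) = (cc k w' + 1, col k w')"
      using Suc.IH[OF d' s'] kj Suc.prems(3) by simp
    have "cc k w' = cc k w"
    proof -
      have "cc k w' = length (filter (\<lambda>x. fst x < k) (filter (\<lambda>x. fst x \<noteq> Suc j) (takeWhile (\<lambda>x. fst x \<noteq> k) w)))"
        unfolding cc_def w'_def using kj by (simp add: takeWhile_filter_comm)
      also have "\<dots> = cc k w" unfolding cc_def filter_filter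
        using kj by (intro arg_cong[where f=length] filter_cong) auto
      finally show ?thesis .
    qed
    moreover have "col k w' = col k w"
    proof -
      have kin: "k \<in> fst ` set w" using Suc.prems kj by force
      have kin': "k \<in> fst ` set w'" using s' kj Suc.prems(3) by force
      have "dropWhile (\<lambda>x. fst x \<noteq> k) w \<noteq> []" using kin by auto
      then obtain y ys where yy: "dropWhile (\<lambda>x. fst x \<noteq> k) w = y # ys"
        by (cases "dropWhile (\<lambda>x. fst x \<noteq> k) w") auto
      have "fst y = k" using yy by (metis (mono_tags, lifting) dropWhile_eq_Cons_conv)
      then show ?thesis using col_alt[OF kin] col_alt[OF kin'] kj yy
        unfolding w'_def by (simp add: dropWhile_filter_comm)
    qed
    moreover have "k - 1 < j" using kj Suc.prems(3) by simp
    ultimately show ?thesis using eq IH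
      by (simp add: nth_append length_acode_aux)
  qed
qed

definition tau :: "nat \<Rightarrow> nat \<Rightarrow> nat" where
  "tau i x = (if x = i then Suc i else if x = Suc i then i else x)"
definition sw :: "nat \<Rightarrow> cword \<Rightarrow> cword" where
  "sw i w = map (\<lambda>y. (tau i (fst y), snd y)) w"
definition inc0 :: "nat \<Rightarrow> cword \<Rightarrow> cword" where
  "inc0 r w = map (\<lambda>y. (fst y, if fst y = 1 then (snd y + 1) mod r else snd y)) w"

lemma tau_tau[simp]: "tau i (tau i x) = x" unfolding tau_def by auto
lemma tau_eq_iff: "(tau i x = v) = (x = tau i v)" unfolding tau_def by auto

lemma G_D:
  assumes "w \<in> G r n"
  shows "length w = n" "distinct (map fst w)" "fst ` set w = {1..n}" "\<And>y. y \<in> set w \<Longrightarrow> snd y < r"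
  using assms unfolding G_def by auto

lemma nth_map_upt1: "v \<in> {1..n} \<Longrightarrow> map f [1..<n+1] ! (v - 1) = f v"
  by (subst nth_map_upt) auto

lemma cmult_geni:
  assumes "w \<in> G r n" "1 \<le> i" "i < n"
  shows "cmult r (geni n i) w = sw i w"
  unfolding cmult_def sw_def
proof (rule map_cong[OF refl])
  fix y assume y: "y \<in> set w"
  then have "fst y \<in> {1..n}" using G_D(3)[OF assms(1)] by blast
  then have a: "geni n i ! (fst y - 1) = (tau i (fst y), 0)"
    unfolding geni_def tau_def by (simp only: nth_map_upt1) simp
  have "snd y < r" using G_D(4)[OF assms(1) y] .
  then show "(fst (geni n i ! (fst y - 1)), (snd y + snd (geni n i ! (fst y - 1))) mod r) = (tau i (fst y), snd y)"
    using a by simp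
qed

lemma cmult_gen0:
  assumes "w \<in> G r n"
  shows "cmult r (gen0 r n) w = inc0 r w"
  unfolding cmult_def inc0_def
proof (rule map_cong[OF refl])
  fix y assume y: "y \<in> set w"
  then have "fst y \<in> {1..n}" using G_D(3)[OF assms(1)] by blast
  then have a: "gen0 r n ! (fst y - 1) = (fst y, if fst y = 1 then 1 mod r else 0)"
    unfolding gen0_def by (simp only: nth_map_upt1)
  have "snd y < r" using G_D(4)[OF assms(1) y] .
  then show "(fst (gen0 r n ! (fst y - 1)), (snd y + snd (gen0 r n ! (fst y - 1))) mod r) = (fst y, if fst y = 1 then (snd y + 1) mod r else snd y)"
    using a by (simp add: mod_add_right_eq)
qed

lemma tau_in: "1 \<le> i \<Longrightarrow> i < n \<Longrightarrow> x \<in> {1..n} \<Longrightarrow> tau i x \<in> {1..n}"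
  unfolding tau_def by auto

lemma sw_G:
  assumes "w \<in> G r n" "1 \<le> i" "i < n"
  shows "sw i w \<in> G r n"
proof -
  have m: "map fst (sw i w) = map (tau i) (map fst w)" unfolding sw_def by simp
  have inj: "inj (tau i)" by (metis injI tau_tau)
  have "distinct (map (tau i) (map fst w))" using G_D(2)[OF assms(1)] inj
    by (simp only: distinct_map) (meson inj_on_subset subset_UNIV)
  then have "distinct (map fst (sw i w))" unfolding m .
  moreover have "set (map fst (sw i w)) = {1..n}"
  proof -
    have "set (map fst (sw i w)) = tau i ` (fst ` set w)" unfolding m set_map ..
    also have "\<dots> = tau i ` {1..n}" using G_D(3)[OF assms(1)] by simp
    also have "\<dots> = {1..n}"
    proof
      show "tau i ` {1..n} \<subseteq> {1..n}" using tau_in[OF assms(2,3)] by blast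
      show "{1..n} \<subseteq> tau i ` {1..n}"
      proof
        fix x assume "x \<in> {1..n}"
        then show "x \<in> tau i ` {1..n}" using tau_in[OF assms(2,3)] by (metis image_eqI tau_tau)
      qed
    qed
    finally show ?thesis .
  qed
  moreover have "length (sw i w) = n" using G_D(1)[OF assms(1)] unfolding sw_def by simp
  moreover have "\<forall>x\<in>set (sw i w). snd x < r" using G_D(4)[OF assms(1)] unfolding sw_def by auto
  ultimately show ?thesis unfolding G_def by blast
qed

lemma inc0_G:
  assumes "w \<in> G r n" "1 \<le> r"
  shows "inc0 r w \<in> G r n"
proof -
  have m: "map fst (inc0 r w) = map fst w" unfolding inc0_def by simp
  have "length (inc0 r w) = n" using G_D(1)[OF assms(1)] unfolding inc0_def by simp
  moreover have "distinct (map fst (inc0 r w))" unfolding m using G_D(2)[OF assms(1)] .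
  moreover have "set (map fst (inc0 r w)) = {1..n}" unfolding m using G_D(3)[OF assms(1)] by simp
  moreover have "\<forall>x\<in>set (inc0 r w). snd x < r" using G_D(4)[OF assms(1)] assms(2) unfolding inc0_def by auto
  ultimately show ?thesis unfolding G_def by blast
qed

lemma sw_sw: "sw i (sw i w) = w" unfolding sw_def by (simp add: map_idI)

lemma pos_sw: "pos v (sw i w) = pos (tau i v) w"
  unfolding pos_def sw_def takeWhile_map by (simp add: o_def tau_eq_iff)

lemma col_sw: "tau i v \<in> fst ` set w \<Longrightarrow> col v (sw i w) = col (tau i v) w"
  unfolding col_def pos_sw using pos_less[of "tau i v" w] by (simp add: sw_def)

lemma cc_sw: "cc k (sw i w) = card {j. j < pos (tau i k) w \<and> tau i (fst (w ! j)) < k}"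
proof -
  have "cc k (sw i w) = card {j. j < pos (tau i k) w \<and> fst (sw i w ! j) < k}"
    unfolding cc_card pos_sw ..
  also have "\<dots> = card {j. j < pos (tau i k) w \<and> tau i (fst (w ! j)) < k}"
  proof (rule arg_cong[where f=card], rule Collect_cong)
    fix j
    show "(j < pos (tau i k) w \<and> fst (sw i w ! j) < k) = (j < pos (tau i k) w \<and> tau i (fst (w ! j)) < k)"
    proof (cases "j < length w")
      case True then show ?thesis by (simp add: sw_def)
    next
      case False
      have "pos (tau i k) w \<le> length w" unfolding pos_def by (rule length_takeWhile_le)
      then show ?thesis using False by auto
    qed
  qed
  finally show ?thesis .
qed

lemma card_split:
  assumes "distinct (map fst w)" "v \<in> fst ` set w" "m \<le> length w" "\<not> P v"
  shows "card {j. j < m \<and> (P (fst (w ! j)) \<or> fst (w ! j) = v)}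
         = card {j. j < m \<and> P (fst (w ! j))} + (if pos v w < m then 1 else 0)"
proof -
  have T: "{j. j < m \<and> fst (w ! j) = v} = (if pos v w < m then {pos v w} else {})"
  proof -
    have *: "\<And>j. j < m \<Longrightarrow> fst (w ! j) = v \<Longrightarrow> j = pos v w"
    proof -
      fix j assume "j < m" "fst (w ! j) = v"
      then have "pos (fst (w ! j)) w = j" using pos_of_nth[OF assms(1), of j] assms(3) by simp
      then show "j = pos v w" using \<open>fst (w ! j) = v\<close> by simp
    qed
    have "fst (w ! pos v w) = v" using pos_nth[OF assms(2)] .
    show ?thesis
    proof (cases "pos v w < m")
      case True
      have "{j. j < m \<and> fst (w ! j) = v} = {pos v w}"
      proof (rule set_eqI)
        fix j show "(j \<in> {j. j < m \<and> fst (w ! j) = v}) = (j \<in> {pos v w})"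
        proof
          assume "j \<in> {j. j < m \<and> fst (w ! j) = v}"
          then have "j = pos v w" using * by simp
          then show "j \<in> {pos v w}" by simp
        next
          assume "j \<in> {pos v w}"
          then show "j \<in> {j. j < m \<and> fst (w ! j) = v}" using True \<open>fst (w ! pos v w) = v\<close> by simp
        qed
      qed
      then show ?thesis using True by simp
    next
      case False
      have "{j. j < m \<and> fst (w ! j) = v} = {}"
      proof -
        have "\<not> (j < m \<and> fst (w ! j) = v)" for j
        proof
          assume h: "j < m \<and> fst (w ! j) = v"
          then have "j = pos v w" using * by simp
          then show False using h False by simp
        qed
        then show ?thesis by simp
      qed
      then show ?thesis using False by simp
    qed
  qed
  define S where "S = {j. j < m \<and> P (fst (w ! j))}"
  define U where "U = {j. j < m \<and> fst (w ! j) = v}"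
  have e: "{j. j < m \<and> (P (fst (w ! j)) \<or> fst (w ! j) = v)} = S \<union> U"
    unfolding S_def U_def by blast
  have fS: "finite S" unfolding S_def by simp
  have fU: "finite U" unfolding U_def by simp
  have d: "S \<inter> U = {}" unfolding S_def U_def using assms(4) by auto
  have "card (S \<union> U) = card S + card U" by (rule card_Un_disjoint[OF fS fU d])
  moreover have "card U = (if pos v w < m then 1 else 0)" unfolding U_def T by simp
  ultimately show ?thesis unfolding e S_def by simp
qed

lemma sum_two:
  assumes "finite S" "i \<in> S" "Suc i \<in> S"
  shows "sum f S = f i + f (Suc i) + sum f (S - {i, Suc i})"
proof -
  have "sum f S = f i + sum f (S - {i})" using sum.remove[OF assms(1,2)] .
  moreover have "sum f (S - {i}) = f (Suc i) + sum f (S - {i} - {Suc i})"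
    using sum.remove[of "S - {i}" "Suc i" f] assms by auto
  moreover have "S - {i} - {Suc i} = S - {i, Suc i}" by auto
  ultimately show ?thesis by (simp add: add.assoc)
qed

lemma tau_less: "k \<noteq> i \<Longrightarrow> k \<noteq> Suc i \<Longrightarrow> (tau i x < k) = (x < k)"
  unfolding tau_def by auto

lemma trm_sw_other:
  assumes "w \<in> G r n" "k \<in> {1..n}" "k \<noteq> i" "k \<noteq> Suc i"
  shows "trm k (sw i w) = trm k w"
proof -
  have t: "tau i k = k" using assms(3,4) unfolding tau_def by simp
  have kin: "k \<in> fst ` set w" using G_D(3)[OF assms(1)] assms(2) by simp
  have "col k (sw i w) = col k w" using col_sw[of i k w] t kin by simp
  moreover have "cc k (sw i w) = cc k w"
  proof -
    have "cc k (sw i w) = card {j. j < pos (tau i k) w \<and> tau i (fst (w ! j)) < k}" by (rule cc_sw)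
    also have "\<dots> = cc k w" unfolding cc_card t using tau_less[OF assms(3,4)] by simp
    finally show ?thesis .
  qed
  ultimately show ?thesis unfolding trm_def by simp
qed

lemma FF_sw:
  assumes "w \<in> G r n" "1 \<le> i" "i < n"
  shows "FF n (sw i w) = FF n w + (if pos i w < pos (Suc i) w
            then 1 - (if col (Suc i) w > 0 then 2 else 0)
            else (if col i w > 0 then 2 else 0) - 1)"
proof -
  note GD = G_D[OF assms(1)]
  define p where "p = pos i w"
  define q where "q = pos (Suc i) w"
  define A where "A = card {j. j < p \<and> fst (w ! j) < i}"
  define B where "B = card {j. j < q \<and> fst (w ! j) < i}"
  have iin: "i \<in> fst ` set w" using GD(3) assms by simp
  have Siin: "Suc i \<in> fst ` set w" using GD(3) assms by simp
  have pl: "p \<le> length w" using pos_less[OF iin] unfolding p_def by simp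
  have ql: "q \<le> length w" using pos_less[OF Siin] unfolding q_def by simp
  have pq: "p \<noteq> q" using pos_nth[OF iin] pos_nth[OF Siin] unfolding p_def q_def by force
  have c1: "cc i w = A" unfolding cc_card A_def p_def ..
  have c2: "cc (Suc i) w = B + (if p < q then 1 else 0)"
  proof -
    have "cc (Suc i) w = card {j. j < q \<and> (fst (w ! j) < i \<or> fst (w ! j) = i)}"
      unfolding cc_card q_def by (rule arg_cong[where f=card]) auto
    also have "\<dots> = B + (if p < q then 1 else 0)"
      unfolding B_def p_def using card_split[OF GD(2) iin ql, of "\<lambda>x. x < i"] by simp
    finally show ?thesis .
  qed
  have tii: "tau i i = Suc i" and tiSi: "tau i (Suc i) = i" unfolding tau_def by auto
  have c3: "cc i (sw i w) = B"
    unfolding cc_sw tii B_def q_def by (rule arg_cong[where f=card]) (auto simp: tau_def)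
  have c4: "cc (Suc i) (sw i w) = A + (if q < p then 1 else 0)"
  proof -
    have "cc (Suc i) (sw i w) = card {j. j < p \<and> (fst (w ! j) < i \<or> fst (w ! j) = Suc i)}"
      unfolding cc_sw tiSi p_def by (rule arg_cong[where f=card]) (auto simp: tau_def)
    also have "\<dots> = A + (if q < p then 1 else 0)"
      unfolding A_def q_def using card_split[OF GD(2) Siin pl, of "\<lambda>x. x < i"] by simp
    finally show ?thesis .
  qed
  have d1: "col i (sw i w) = col (Suc i) w" using col_sw[of i i w] tii Siin by simp
  have d2: "col (Suc i) (sw i w) = col i w" using col_sw[of i "Suc i" w] tiSi iin by simp
  have S: "FF n x = trm i x + trm (Suc i) x + (\<Sum>k\<in>{1..n} - {i, Suc i}. trm k x)" for x
    unfolding FF_def using assms by (intro sum_two) auto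
  have R: "(\<Sum>k\<in>{1..n} - {i, Suc i}. trm k (sw i w)) = (\<Sum>k\<in>{1..n} - {i, Suc i}. trm k w)"
    by (rule sum.cong[OF refl]) (auto intro!: trm_sw_other[OF assms(1)])
  have T: "trm i (sw i w) + trm (Suc i) (sw i w) = trm i w + trm (Suc i) w +
           (if p < q then 1 - (if col (Suc i) w > 0 then 2 else 0)
            else (if col i w > 0 then 2 else 0) - 1)"
  proof (cases "p < q")
    case True
    then show ?thesis unfolding trm_def c1 c2 c3 c4 d1 d2 by simp
  next
    case False
    then have "q < p" using pq by simp
    then show ?thesis unfolding trm_def c1 c2 c3 c4 d1 d2 using False by simp
  qed
  show ?thesis unfolding S[of "sw i w"] S[of w] R using T unfolding p_def q_def by simp
qed

lemma pos_inc0: "pos v (inc0 r w) = pos v w"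
  unfolding pos_def inc0_def takeWhile_map by (simp add: o_def)

lemma cc_inc0: "cc k (inc0 r w) = cc k w"
  unfolding cc_def inc0_def takeWhile_map by (simp add: o_def filter_map)

lemma col_inc0: "k \<in> fst ` set w \<Longrightarrow> col k (inc0 r w) = (if k = 1 then (col 1 w + 1) mod r else col k w)"
  unfolding col_def pos_inc0 using pos_less[of k w] pos_nth[of k w]
  by (auto simp: inc0_def)

lemma cc1: "w \<in> G r n \<Longrightarrow> cc 1 w = 0"
proof -
  assume w: "w \<in> G r n"
  have "\<not> (j < pos 1 w \<and> fst (w ! j) < 1)" for j
  proof
    assume h: "j < pos 1 w \<and> fst (w ! j) < 1"
    have "pos 1 w \<le> length w" unfolding pos_def by (rule length_takeWhile_le)
    then have "w ! j \<in> set w" using h by simp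
    then have "fst (w ! j) \<in> {1..n}" using G_D(3)[OF w] by blast
    then show False using h by simp
  qed
  then show ?thesis unfolding cc_card by simp
qed

lemma FF_split1: "1 \<le> n \<Longrightarrow> FF n x = trm 1 x + (\<Sum>k\<in>{1..n} - {1}. trm k x)"
  unfolding FF_def by (rule sum.remove) auto

lemma FF_inc0:
  assumes "w \<in> G r n" "1 \<le> n"
  shows "FF n (inc0 r w) = FF n w - int (col 1 w) + int ((col 1 w + 1) mod r)"
proof -
  have vals: "fst ` set w = {1..n}" using G_D(3)[OF assms(1)] .
  have R: "(\<Sum>k\<in>{1..n} - {1}. trm k (inc0 r w)) = (\<Sum>k\<in>{1..n} - {1}. trm k w)"
  proof (rule sum.cong[OF refl])
    fix k assume k: "k \<in> {1..n} - {1}"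
    then have "k \<in> fst ` set w" using vals by auto
    then have "col k (inc0 r w) = col k w" using col_inc0[of k w r] k by simp
    then show "trm k (inc0 r w) = trm k w" unfolding trm_def cc_inc0 by simp
  qed
  have one: "1 \<in> fst ` set w" using vals assms(2) by auto
  have "trm 1 (inc0 r w) = int ((col 1 w + 1) mod r)"
    unfolding trm_def cc_inc0 cc1[OF assms(1)] col_inc0[OF one] by simp
  moreover have "trm 1 w = int (col 1 w)"
    unfolding trm_def cc1[OF assms(1)] by simp
  ultimately show ?thesis unfolding FF_split1[OF assms(2)] R by simp
qed

lemma gens_step:
  assumes "1 \<le> r" "g \<in> gens r n" "w \<in> G r n"
  shows "cmult r g w \<in> G r n \<and> FF n (cmult r g w) \<le> FF n w + 1"
proof (cases "g = gen0 r n")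
  case True
  then have c: "cmult r g w = inc0 r w" using cmult_gen0[OF assms(3)] by simp
  have "FF n (inc0 r w) \<le> FF n w + 1"
  proof (cases "n = 0")
    case True
    then have "w = []" using G_D(1)[OF assms(3)] by simp
    then show ?thesis by (simp add: inc0_def)
  next
    case False
    have "(col 1 w + 1) mod r \<le> col 1 w + 1" by (rule mod_less_eq_dividend)
    then have "int ((col 1 w + 1) mod r) \<le> int (col 1 w) + 1" by linarith
    then show ?thesis using FF_inc0[OF assms(3)] False by simp
  qed
  then show ?thesis using c inc0_G[OF assms(3,1)] by simp
next
  case False
  then obtain i where i: "g = geni n i" "1 \<le> i" "i < n" using assms(2) unfolding gens_def by auto
  then have c: "cmult r g w = sw i w" using cmult_geni[OF assms(3)] by simp
  show ?thesis unfolding c using sw_G[OF assms(3) i(2,3)] FF_sw[OF assms(3) i(2,3)] by simp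
qed

lemma cid_G: "1 \<le> r \<Longrightarrow> cid n \<in> G r n"
proof -
  assume r: "1 \<le> r"
  have m: "map fst (cid n) = [1..<n+1]" unfolding cid_def by (simp add: o_def)
  have "length (cid n) = n" unfolding cid_def by simp
  moreover have "distinct (map fst (cid n))" unfolding m by simp
  moreover have "set (map fst (cid n)) = {1..n}" unfolding m by auto
  moreover have "\<forall>x\<in>set (cid n). snd x < r" using r unfolding cid_def by auto
  ultimately show ?thesis unfolding G_def by blast
qed

lemma cid_nth: "j < n \<Longrightarrow> cid n ! j = (Suc j, 0)"
  unfolding cid_def by (simp add: nth_map_upt del: upt_Suc)

lemma FF_cid: "FF n (cid n) = 0"
proof -
  have d: "distinct (map fst (cid n))" unfolding cid_def by (simp add: o_def)
  have "trm k (cid n) = 0" if k: "k \<in> {1..n}" for k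
  proof -
    have l: "k - 1 < length (cid n)" using k by (simp add: cid_def, arith)
    have kn: "k - 1 < n" using k by auto
    have ck: "cid n ! (k - 1) = (k, 0)" using cid_nth[OF kn] k by simp
    have f: "fst (cid n ! (k - 1)) = k" using ck by simp
    have p: "pos k (cid n) = k - 1" using pos_of_nth[OF d l] f by simp
    have cl: "col k (cid n) = 0" unfolding col_def p using ck by simp
    have "{j. j < k - 1 \<and> fst (cid n ! j) < k} = {j. j < k - 1}"
      using k cid_nth[of _ n] by auto
    then have "cc k (cid n) = k - 1" unfolding cc_card p by simp
    then show ?thesis unfolding trm_def cl using k by simp
  qed
  then show ?thesis unfolding FF_def by simp
qed

lemma lower:
  assumes "1 \<le> r" "set gs \<subseteq> gens r n"
  shows "foldr (cmult r) gs (cid n) \<in> G r n \<and> FF n (foldr (cmult r) gs (cid n)) \<le> int (length gs)"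
  using assms(2)
proof (induction gs)
  case Nil then show ?case using cid_G[OF assms(1)] FF_cid by simp
next
  case (Cons g gs)
  then show ?case using gens_step[OF assms(1), where g=g and n=n and w="foldr (cmult r) gs (cid n)"] by auto
qed

lemma cc_le: assumes "w \<in> G r n" "k \<in> {1..n}" shows "cc k w \<le> k - 1"
proof -
  note GD = G_D[OF assms(1)]
  define A where "A = {j. j < pos k w \<and> fst (w ! j) < k}"
  have pl: "pos k w \<le> length w" unfolding pos_def by (rule length_takeWhile_le)
  have inj: "inj_on (\<lambda>j. fst (w ! j)) A"
  proof (rule inj_onI)
    fix a b assume "a \<in> A" "b \<in> A" "fst (w ! a) = fst (w ! b)"
    then show "a = b" using GD(2) pl unfolding A_def
      by (metis (no_types, lifting) length_map mem_Collect_eq nth_eq_iff_index_eq nth_map order_less_le_trans)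
  qed
  have sub: "(\<lambda>j. fst (w ! j)) ` A \<subseteq> {1..<k}"
  proof
    fix x assume "x \<in> (\<lambda>j. fst (w ! j)) ` A"
    then obtain j where j: "j \<in> A" "x = fst (w ! j)" by blast
    then have "w ! j \<in> set w" using pl unfolding A_def by simp
    then have "x \<in> {1..n}" using GD(3) j(2) by blast
    then show "x \<in> {1..<k}" using j unfolding A_def by simp
  qed
  have "card A \<le> card {1..<k}" by (rule card_inj_on_le[OF inj sub]) simp
  then show ?thesis unfolding cc_card A_def[symmetric] by simp
qed

lemma FF_nonneg: assumes "w \<in> G r n" shows "0 \<le> FF n w"
  unfolding FF_def
proof (rule sum_nonneg)
  fix k assume k: "k \<in> {1..n}"
  have "cc k w \<le> k - 1" by (rule cc_le[OF assms k])
  then show "0 \<le> trm k w" unfolding trm_def using k by auto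
qed

lemma pos_inj:
  assumes "a \<in> fst ` set w" "b \<in> fst ` set w" "a \<noteq> b"
  shows "pos a w \<noteq> pos b w"
  using pos_nth[OF assms(1)] pos_nth[OF assms(2)] assms(3) by metis

lemma nodesc_cid:
  assumes w: "w \<in> G r n"
    and c1: "1 \<le> n \<longrightarrow> col 1 w = 0"
    and nd: "\<forall>i. 1 \<le> i \<and> i < n \<longrightarrow> \<not> ((pos (Suc i) w < pos i w \<and> col i w = 0) \<or> (pos i w < pos (Suc i) w \<and> col (Suc i) w > 0))"
  shows "w = cid n"
proof -
  note GD = G_D[OF w]
  have mono0: "pos i w < pos (Suc i) w" if "1 \<le> i" "i < n" "col i w = 0" for i
  proof -
    have "pos i w \<noteq> pos (Suc i) w" using pos_inj[of i w "Suc i"] GD(3) that by auto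
    then show ?thesis using nd that by auto
  qed
  have Z: "1 \<le> k \<and> k \<le> n \<longrightarrow> col k w = 0" for k
  proof (induction k)
    case 0 then show ?case by simp
  next
    case (Suc k)
    show ?case
    proof (cases "k = 0")
      case True then show ?thesis using c1 by simp
    next
      case False
      show ?thesis
      proof
        assume h: "1 \<le> Suc k \<and> Suc k \<le> n"
        then have ck: "col k w = 0" using Suc.IH False by simp
        have "pos k w < pos (Suc k) w" using mono0[of k] h False ck by simp
        then show "col (Suc k) w = 0" using nd h False ck by auto
      qed
    qed
  qed
  have mono: "pos i w < pos (Suc i) w" if "1 \<le> i" "i < n" for i
    using mono0[OF that] Z[of i] that by simp
  have lo: "1 \<le> k \<and> k \<le> n \<longrightarrow> k - 1 \<le> pos k w" for k
  proof (induction k)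
    case 0 then show ?case by simp
  next
    case (Suc k)
    then show ?case using mono[of k] by (cases "k = 0") auto
  qed
  have hi: "\<forall>k. 1 \<le> k \<and> k + d = n \<longrightarrow> pos k w + d \<le> pos n w" for d
  proof (induction d)
    case 0 then show ?case by simp
  next
    case (Suc d)
    show ?case
    proof (intro allI impI)
      fix k assume k: "1 \<le> k \<and> k + Suc d = n"
      then have "pos (Suc k) w + d \<le> pos n w" using Suc.IH[rule_format, of "Suc k"] by simp
      moreover have "pos k w < pos (Suc k) w" using mono[of k] k by simp
      ultimately show "pos k w + Suc d \<le> pos n w" by simp
    qed
  qed
  have pn: "1 \<le> n \<Longrightarrow> pos n w < n"
    using pos_less[of n w] GD(1,3) by simp
  have posk: "pos k w = k - 1" if "1 \<le> k" "k \<le> n" for k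
  proof -
    have "pos k w + (n - k) \<le> pos n w" using hi[of "n - k"] that by simp
    then show ?thesis using pn lo[of k] that by simp
  qed
  show ?thesis
  proof (rule nth_equalityI)
    show "length w = length (cid n)" using GD(1) by (simp add: cid_def)
  next
    fix j assume "j < length w"
    then have j: "j < n" using GD(1) by simp
    define v where "v = fst (w ! j)"
    have jl: "j < length w" using j GD(1) by simp
    have vin: "v \<in> {1..n}" using GD(3) jl unfolding v_def by force
    have pv: "pos v w = j" unfolding v_def by (rule pos_of_nth[OF GD(2) jl])
    then have vj: "v = Suc j" using posk[of v] vin by simp
    have "snd (w ! j) = 0" using Z[of v] vin pv unfolding col_def by simp
    then show "w ! j = cid n ! j" using cid_nth[OF j] vj unfolding v_def by (simp add: prod_eq_iff)
  qed
qed

definition dec0 :: "cword \<Rightarrow> cword" where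
  "dec0 w = map (\<lambda>y. (fst y, if fst y = 1 then snd y - 1 else snd y)) w"

lemma dec0_G:
  assumes "w \<in> G r n"
  shows "dec0 w \<in> G r n"
proof -
  have m: "map fst (dec0 w) = map fst w" unfolding dec0_def by simp
  have "length (dec0 w) = n" using G_D(1)[OF assms(1)] unfolding dec0_def by simp
  moreover have "distinct (map fst (dec0 w))" unfolding m using G_D(2)[OF assms(1)] .
  moreover have "set (map fst (dec0 w)) = {1..n}" unfolding m using G_D(3)[OF assms(1)] by simp
  moreover have "\<forall>x\<in>set (dec0 w). snd x < r" using G_D(4)[OF assms(1)] unfolding dec0_def
    by (auto simp: less_imp_diff_less)
  ultimately show ?thesis unfolding G_def by blast
qed

lemma pos_dec0: "pos v (dec0 w) = pos v w"
  unfolding pos_def dec0_def takeWhile_map by (simp add: o_def)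

lemma snd_one:
  assumes "w \<in> G r n" "y \<in> set w" "fst y = 1"
  shows "snd y = col 1 w"
proof -
  obtain j where j: "j < length w" "w ! j = y" using assms(2) by (metis in_set_conv_nth)
  have "pos 1 w = j" using pos_of_nth[OF G_D(2)[OF assms(1)] j(1)] j(2) assms(3) by simp
  then show ?thesis unfolding col_def using j by simp
qed

lemma descent:
  assumes r: "1 \<le> r" and w: "w \<in> G r n" and ne: "w \<noteq> cid n"
  shows "\<exists>g\<in>gens r n. \<exists>w'\<in>G r n. w = cmult r g w' \<and> FF n w' = FF n w - 1"
proof -
  note GD = G_D[OF w]
  show ?thesis
  proof (cases "1 \<le> n \<and> col 1 w > 0")
    case True
    have cpos: "col 1 w > 0" and n1: "1 \<le> n" using True by auto
    define w' where "w' = dec0 w"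
    have w'G: "w' \<in> G r n" unfolding w'_def by (rule dec0_G[OF w])
    have one: "1 \<in> fst ` set w" using GD(3) True by simp
    have colr: "col 1 w < r" unfolding col_def using GD(4) pos_less[OF one] by simp
    have inv: "inc0 r w' = w"
      unfolding w'_def dec0_def inc0_def map_map
    proof (rule map_idI)
      fix y assume y: "y \<in> set w"
      show "((\<lambda>y. (fst y, if fst y = 1 then (snd y + 1) mod r else snd y)) \<circ>
             (\<lambda>y. (fst y, if fst y = 1 then snd y - 1 else snd y))) y = y"
      proof (cases "fst y = 1")
        case True
        then have "snd y = col 1 w" using snd_one[OF w y] by simp
        then show ?thesis using True cpos colr by (simp add: prod_eq_iff)
      next
        case False then show ?thesis by simp
      qed
    qed
    have cw': "col 1 w' = col 1 w - 1"
      unfolding col_def w'_def pos_dec0 using pos_less[OF one] pos_nth[OF one]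
      by (simp add: dec0_def)
    have "FF n w = FF n w' - int (col 1 w') + int ((col 1 w' + 1) mod r)"
      using FF_inc0[OF w'G n1] inv by simp
    also have "\<dots> = FF n w' + 1" unfolding cw' using cpos colr by simp
    finally have "FF n w' = FF n w - 1" by simp
    moreover have "w = cmult r (gen0 r n) w'" using cmult_gen0[OF w'G] inv by simp
    moreover have "gen0 r n \<in> gens r n" unfolding gens_def by simp
    ultimately show ?thesis using w'G by blast
  next
    case False
    then have c1: "1 \<le> n \<longrightarrow> col 1 w = 0" by simp
    show ?thesis
    proof (cases "\<exists>i. 1 \<le> i \<and> i < n \<and> ((pos (Suc i) w < pos i w \<and> col i w = 0) \<or> (pos i w < pos (Suc i) w \<and> col (Suc i) w > 0))")
      case True
      then obtain i where i: "1 \<le> i" "i < n"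
        and c: "(pos (Suc i) w < pos i w \<and> col i w = 0) \<or> (pos i w < pos (Suc i) w \<and> col (Suc i) w > 0)"
        by blast
      define w' where "w' = sw i w"
      have w'G: "w' \<in> G r n" unfolding w'_def by (rule sw_G[OF w i])
      have "cmult r (geni n i) w' = w" using cmult_geni[OF w'G i] unfolding w'_def sw_sw .
      moreover have "FF n w' = FF n w - 1" unfolding w'_def using FF_sw[OF w i] c by auto
      moreover have "geni n i \<in> gens r n" unfolding gens_def using i by auto
      ultimately show ?thesis using w'G by metis
    next
      case False
      then have "w = cid n" using nodesc_cid[OF w c1] by blast
      then show ?thesis using ne by simp
    qed
  qed
qed

lemma upper:
  assumes r: "1 \<le> r"
  shows "w \<in> G r n \<Longrightarrow> \<exists>gs. set gs \<subseteq> gens r n \<and> foldr (cmult r) gs (cid n) = w \<and> int (length gs) \<le> FF n w"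
proof (induction "nat (FF n w)" arbitrary: w rule: less_induct)
  case less
  show ?case
  proof (cases "w = cid n")
    case True
    then show ?thesis using FF_nonneg[OF less.prems] by (intro exI[of _ "[]"]) simp
  next
    case False
    then obtain g w' where g: "g \<in> gens r n" and w': "w' \<in> G r n" and e: "w = cmult r g w'"
      and f: "FF n w' = FF n w - 1"
      using descent[OF r less.prems] by blast
    have "0 \<le> FF n w'" using FF_nonneg[OF w'] .
    then have "nat (FF n w') < nat (FF n w)" using f by simp
    then obtain gs where gs: "set gs \<subseteq> gens r n" "foldr (cmult r) gs (cid n) = w'" "int (length gs) \<le> FF n w'"
      using less.hyps[OF _ w'] by blast
    show ?thesis
      using gs g e f by (intro exI[of _ "g # gs"]) simp
  qed
qed

theorem lemma3p1:
  fixes r n :: nat and \<pi> :: cword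
  assumes "1 \<le> r" and "\<pi> \<in> G r n"
  shows "int (clen r n \<pi>) =
    (\<Sum>i=1..n. let c = fst (acode \<pi> ! (i - 1)); e = snd (acode \<pi> ! (i - 1)) in
        int i - int c + (if e > 0 then 2 * (int c - 1) + int e else 0))"
proof -
  note GD = G_D[OF assms(2)]
  have FFeq: "FF n \<pi> = (\<Sum>i=1..n. let c = fst (acode \<pi> ! (i - 1)); e = snd (acode \<pi> ! (i - 1)) in
        int i - int c + (if e > 0 then 2 * (int c - 1) + int e else 0))"
    unfolding FF_def
  proof (rule sum.cong[OF refl])
    fix i assume i: "i \<in> {1..n}"
    have "acode \<pi> ! (i - 1) = (cc i \<pi> + 1, col i \<pi>)"
      unfolding acode_def GD(1) using acode_aux_nth[OF GD(2), of n i] GD(3) i by simp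
    then show "trm i \<pi> = (let c = fst (acode \<pi> ! (i - 1)); e = snd (acode \<pi> ! (i - 1)) in
        int i - int c + (if e > 0 then 2 * (int c - 1) + int e else 0))"
      unfolding trm_def Let_def by simp
  qed
  obtain gs where gs: "set gs \<subseteq> gens r n" "foldr (cmult r) gs (cid n) = \<pi>" "int (length gs) \<le> FF n \<pi>"
    using upper[OF assms] by blast
  have lo: "FF n \<pi> \<le> int (length gs')" if "set gs' \<subseteq> gens r n" "foldr (cmult r) gs' (cid n) = \<pi>" for gs'
    using lower[OF assms(1) that(1)] that(2) by simp
  have len: "length gs = nat (FF n \<pi>)" using lo[OF gs(1,2)] gs(3) by simp
  have "clen r n \<pi> = nat (FF n \<pi>)"
    unfolding clen_def
  proof (rule Least_equality)
    show "\<exists>gs. length gs = nat (FF n \<pi>) \<and> set gs \<subseteq> gens r n \<and> foldr (cmult r) gs (cid n) = \<pi>"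
      using gs len by blast
  next
    fix k assume "\<exists>gs. length gs = k \<and> set gs \<subseteq> gens r n \<and> foldr (cmult r) gs (cid n) = \<pi>"
    then obtain gs' where "length gs' = k" "set gs' \<subseteq> gens r n" "foldr (cmult r) gs' (cid n) = \<pi>" by blast
    then show "nat (FF n \<pi>) \<le> k" using lo by fastforce
  qed
  then show ?thesis using FFeq FF_nonneg[OF assms(2)] by simp
qed
end
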